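(* Let $\mathfrak{s}$ be a finite-dimensional complex solvable Lie algebra. There is a Zariski closed subset $W\subseteq\mathrm{Hom}(\mathfrak{s},\mathfrak{sl}_2)$ with $0\notin W$ such that $\mathrm{rep}(\mathfrak{s},\mathfrak{sl}_2)\subseteq\mathrm{rep}^1(\mathfrak{s},\mathfrak{sl}_2)\cup W$. In particular, $\mathrm{rep}(\mathfrak{s},\mathfrak{sl}_2)_{(0)}=\mathrm{rep}^1(\mathfrak{s},\mathfrak{sl}_2)_{(0)}$.
   Context: $\mathrm{rep}(\mathfrak{s},\mathfrak{sl}_2)\subseteq\mathrm{Hom}(\mathfrak{s},\mathfrak{sl}_2)$ is the variety of Lie algebra homomorphisms, $\mathrm{rep}^1(\mathfrak{s},\mathfrak{sl}_2)$ the subset of those of rank at most $1$, and $X_{(0)}$ the analytic germ at $0$. *)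

theory Defs
  imports "HOL-Analysis.Analysis"
begin

text \<open>A finite-dimensional complex Lie algebra s is modelled on C^n (n = CARD('n))
  with a chosen standard basis, together with a bracket.\<close>

definition lie_algebra :: "(complex^'n \<Rightarrow> complex^'n \<Rightarrow> complex^'n) \<Rightarrow> bool" where
  "lie_algebra br \<longleftrightarrow>
     (\<forall>x y z. br (x + y) z = br x z + br y z) \<and>
     (\<forall>c x y. br (c *s x) y = c *s br x y) \<and>
     (\<forall>x y z. br x (y + z) = br x y + br x z) \<and>
     (\<forall>c x y. br x (c *s y) = c *s br x y) \<and>
     (\<forall>x. br x x = 0) \<and>
     (\<forall>x y z. br x (br y z) + br y (br z x) + br z (br x y) = 0)"

text \<open>Linear span of all brackets [x,y] with x,y in A (closure under sums suffices,
  since the bracket is bilinear).\<close>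
inductive_set bracket_sums :: "('v::{zero,plus} \<Rightarrow> 'v \<Rightarrow> 'v) \<Rightarrow> 'v set \<Rightarrow> 'v set"
  for br A where
  bs_zero: "0 \<in> bracket_sums br A"
| bs_br: "x \<in> A \<Longrightarrow> y \<in> A \<Longrightarrow> br x y \<in> bracket_sums br A"
| bs_add: "u \<in> bracket_sums br A \<Longrightarrow> v \<in> bracket_sums br A \<Longrightarrow> u + v \<in> bracket_sums br A"

primrec derived_series :: "('v::{zero,plus} \<Rightarrow> 'v \<Rightarrow> 'v) \<Rightarrow> nat \<Rightarrow> 'v set" where
  "derived_series br 0 = UNIV"
| "derived_series br (Suc k) = bracket_sums br (derived_series br k)"

definition solvable_lie :: "('v::{zero,plus} \<Rightarrow> 'v \<Rightarrow> 'v) \<Rightarrow> bool" where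
  "solvable_lie br \<longleftrightarrow> (\<exists>k. derived_series br k = {0})"

definition sl2 :: "(complex^2^2) set" where
  "sl2 = {A. trace A = 0}"

definition msc :: "complex \<Rightarrow> complex^2^2 \<Rightarrow> complex^2^2" where
  "msc c A = (\<chi> i j. c * A $ i $ j)"

definition mbr :: "complex^2^2 \<Rightarrow> complex^2^2 \<Rightarrow> complex^2^2" where
  "mbr A B = A ** B - B ** A"

text \<open>Hom(s, sl_2): a linear map is given by the images of the basis vectors.\<close>
definition hom_space :: "('n::finite \<Rightarrow> complex^2^2) set" where
  "hom_space = {\<phi>. \<forall>i. \<phi> i \<in> sl2}"

definition lin_of :: "('n::finite \<Rightarrow> complex^2^2) \<Rightarrow> complex^'n \<Rightarrow> complex^2^2" where
  "lin_of \<phi> x = (\<Sum>i\<in>UNIV. msc (x $ i) (\<phi> i))"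

definition rep_var :: "(complex^'n \<Rightarrow> complex^'n \<Rightarrow> complex^'n) \<Rightarrow> ('n::finite \<Rightarrow> complex^2^2) set" where
  "rep_var br = {\<phi> \<in> hom_space. \<forall>x y. lin_of \<phi> (br x y) = mbr (lin_of \<phi> x) (lin_of \<phi> y)}"

definition rank_le1 :: "('n::finite \<Rightarrow> complex^2^2) \<Rightarrow> bool" where
  "rank_le1 \<phi> \<longleftrightarrow> (\<exists>A. \<forall>x. \<exists>c. lin_of \<phi> x = msc c A)"

definition rep1_var :: "(complex^'n \<Rightarrow> complex^'n \<Rightarrow> complex^'n) \<Rightarrow> ('n::finite \<Rightarrow> complex^2^2) set" where
  "rep1_var br = {\<phi> \<in> rep_var br. rank_le1 \<phi>}"

inductive_set poly_fun :: "(('n::finite \<Rightarrow> complex^2^2) \<Rightarrow> complex) set" where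
  pf_const: "(\<lambda>\<phi>. c) \<in> poly_fun"
| pf_coord: "(\<lambda>\<phi>. \<phi> i $ a $ b) \<in> poly_fun"
| pf_add: "p \<in> poly_fun \<Longrightarrow> q \<in> poly_fun \<Longrightarrow> (\<lambda>\<phi>. p \<phi> + q \<phi>) \<in> poly_fun"
| pf_mult: "p \<in> poly_fun \<Longrightarrow> q \<in> poly_fun \<Longrightarrow> (\<lambda>\<phi>. p \<phi> * q \<phi>) \<in> poly_fun"

definition zariski_closed :: "('n::finite \<Rightarrow> complex^2^2) set \<Rightarrow> bool" where
  "zariski_closed W \<longleftrightarrow> (\<exists>P \<subseteq> poly_fun. W = {\<phi> \<in> hom_space. \<forall>p\<in>P. p \<phi> = 0})"

end

theory Submission
  imports Defs
begin


lemma mat2_eq: "(A::complex^2^2) = B \<longleftrightarrow> A$1$1 = B$1$1 \<and> A$1$2 = B$1$2 \<and> A$2$1 = B$2$1 \<and> A$2$2 = B$2$2"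
  by (auto simp: vec_eq_iff forall_2)

lemma mmul2: "((A::complex^2^2) ** B)$i$j = A$i$1*B$1$j + A$i$2*B$2$j"
  by (simp add: matrix_matrix_mult_def sum_2)

lemma trace2: "trace (A::complex^2^2) = A$1$1 + A$2$2"
  by (simp add: trace_def sum_2)

lemma msc_nth[simp]: "msc c A $ i $ j = c * A $ i $ j"
  by (simp add: msc_def)

lemma mbr_nth: "mbr A B $ i $ j = (A ** B - B ** A) $ i $ j"
  by (simp add: mbr_def)

lemma centralizer:
  assumes "trace M = 0" "trace N = 0" "N \<noteq> 0" "mbr M N = 0"
  shows "\<exists>c. M = msc c N"
proof -
  have e: "(mbr M N)$i$j = 0" for i j using assms(4) by simp
  note e11 = e[of 1 1] and e12 = e[of 1 2] and e21 = e[of 2 1]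
  have t: "M$2$2 = - M$1$1" "N$2$2 = - N$1$1" using assms(1,2) by (auto simp: trace2 add_eq_0_iff)
  from e11 e12 e21 have
    a: "M$1$2 * N$2$1 = N$1$2 * M$2$1" and
    b: "M$1$1 * N$1$2 = M$1$2 * N$1$1" and
    c: "M$2$1 * N$1$1 = M$1$1 * N$2$1"
    by (auto simp: mbr_def mmul2 t algebra_simps)
  have nz: "N$1$1 \<noteq> 0 \<or> N$1$2 \<noteq> 0 \<or> N$2$1 \<noteq> 0" using assms(3) t by (auto simp: mat2_eq)
  show ?thesis
  proof (cases "N$1$1 \<noteq> 0")
    case True
    show ?thesis by (rule exI[of _ "M$1$1 / N$1$1"]) (use True a b c t in \<open>auto simp: mat2_eq field_simps\<close>)
  next
    case F1: False
    show ?thesis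
    proof (cases "N$1$2 \<noteq> 0")
      case True
      show ?thesis by (rule exI[of _ "M$1$2 / N$1$2"]) (use True F1 a b c t in \<open>auto simp: mat2_eq field_simps\<close>)
    next
      case False
      with nz F1 have N: "N$2$1 \<noteq> 0" by auto
      show ?thesis by (rule exI[of _ "M$2$1 / N$2$1"]) (use N False F1 a b c t in \<open>auto simp: mat2_eq field_simps\<close>)
    qed
  qed
qed

lemma eigen_sl2:
  assumes "trace A = 0" "trace N = 0" "N \<noteq> 0" "mbr A N = msc l N" "l \<noteq> 0"
  shows "l^2 = 2 * trace (A ** A)"
proof -
  have e: "(mbr A N)$i$j = l * N$i$j" for i j using assms(4) by simp
  note e11 = e[of 1 1] and e12 = e[of 1 2] and e21 = e[of 2 1]
  have t: "A$2$2 = - A$1$1" "N$2$2 = - N$1$1" using assms(1,2) by (auto simp: trace2 add_eq_0_iff)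
  obtain pp qq rr uu vv ww where d: "pp = A$1$1" "qq = A$1$2" "rr = A$2$1" "uu = N$1$1" "vv = N$1$2" "ww = N$2$1" by simp
  from e11 e12 e21 have
    a: "qq * ww - vv * rr = l * uu" and b: "2 * (pp * vv - qq * uu) = l * vv" and c: "2 * (rr * uu - pp * ww) = l * ww"
    by (auto simp: mbr_def mmul2 t algebra_simps d)
  have nz: "uu \<noteq> 0 \<or> vv \<noteq> 0 \<or> ww \<noteq> 0" using assms(3) t d by (auto simp: mat2_eq)
  have goal: "l^2 = 4 * (pp^2 + qq * rr)"
  proof -
    have "(l^2 - 4 * (pp^2+qq * rr)) * l * uu = 0" using a b c by algebra
    moreover have "(l^2 - 4 * (pp^2+qq * rr)) * l * vv = 0" using a b c by algebra
    moreover have "(l^2 - 4 * (pp^2+qq * rr)) * l * ww = 0" using a b c by algebra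
    ultimately show ?thesis using nz assms(5) by auto
  qed
  show ?thesis using goal by (simp add: trace2 mmul2 t d power2_eq_square algebra_simps)
qed



lemma eig_indep:
  fixes f :: "complex^'n \<Rightarrow> complex^'n"
  assumes lf: "Vector_Spaces.linear (*s) (*s) f"
  shows "finite S \<Longrightarrow> (\<forall>w\<in>S. w \<noteq> 0 \<and> f w = e w *s w) \<Longrightarrow> inj_on e S \<Longrightarrow> vec.independent S"
proof (induction S rule: finite_induct)
  case empty
  then show ?case by (simp add: vec.independent_empty)
next
  case (insert a S)
  interpret lf: Vector_Spaces.linear "(*s)" "(*s)" f by (rule lf)
  have IS: "vec.independent S" using insert by (auto simp: inj_on_insert)
  have "a \<notin> vec.span S"
  proof
    assume "a \<in> vec.span S"
    then obtain u where ua: "a = (\<Sum>v\<in>S. u v *s v)" using vec.span_finite[OF insert(1)] by auto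
    have "f a = (\<Sum>v\<in>S. u v *s f v)" unfolding ua by (simp add: lf.sum lf.scale)
    also have "\<dots> = (\<Sum>v\<in>S. (u v * e v) *s v)" using insert(4) by (intro sum.cong) auto
    finally have fa1: "f a = (\<Sum>v\<in>S. (u v * e v) *s v)" .
    have fa2: "f a = (\<Sum>v\<in>S. (e a * u v) *s v)" using insert(4) unfolding ua
      by (simp add: vec.scale_sum_right vec.scale_scale)
    have "(\<Sum>v\<in>S. (u v * (e v - e a)) *s v) = (\<Sum>v\<in>S. (u v * e v) *s v - (e a * u v) *s v)"
      by (intro sum.cong) (auto simp: vector_sub_rdistrib algebra_simps)
    also have "\<dots> = f a - f a" unfolding sum_subtractf using fa1 fa2 by simp
    finally have "(\<Sum>v\<in>S. (u v * (e v - e a)) *s v) = 0" by simp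
    moreover have "\<forall>c. (\<Sum>v\<in>S. c v *s v) = 0 \<longrightarrow> (\<forall>v\<in>S. c v = 0)"
      using IS vec.independent_explicit[of S] by blast
    ultimately have "\<forall>v\<in>S. u v * (e v - e a) = 0"
    proof -
      assume h1: "(\<Sum>v\<in>S. (u v * (e v - e a)) *s v) = 0"
        and h2: "\<forall>c. (\<Sum>v\<in>S. c v *s v) = 0 \<longrightarrow> (\<forall>v\<in>S. c v = 0)"
      from h2 have "(\<Sum>v\<in>S. (\<lambda>v. u v * (e v - e a)) v *s v) = 0 \<longrightarrow> (\<forall>v\<in>S. (\<lambda>v. u v * (e v - e a)) v = 0)"
        by (rule spec)
      then show ?thesis using h1 by simp
    qed
    moreover have "\<forall>v\<in>S. e v \<noteq> e a" using insert(2,5) by (auto simp: inj_on_def)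
    ultimately have "\<forall>v\<in>S. u v = 0" by auto
    then have "a = 0" unfolding ua by simp
    then show False using insert(4) by auto
  qed
  then show ?case using IS vec.independent_insertI by blast
qed

lemma eig_finite:
  fixes f :: "complex^'n \<Rightarrow> complex^'n"
  assumes lf: "Vector_Spaces.linear (*s) (*s) f"
  shows "finite {\<mu>. \<exists>v. v \<noteq> 0 \<and> f v = \<mu> *s v}"
proof -
  let ?E = "{\<mu>. \<exists>v. v \<noteq> 0 \<and> f v = \<mu> *s v}"
  define vv where "vv \<mu> = (SOME v. v \<noteq> 0 \<and> f v = \<mu> *s v)" for \<mu>
  have vv: "vv \<mu> \<noteq> 0 \<and> f (vv \<mu>) = \<mu> *s vv \<mu>" if "\<mu> \<in> ?E" for \<mu>
  proof -
    have "\<exists>v. v \<noteq> 0 \<and> f v = \<mu> *s v" using that by simp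
    then show ?thesis unfolding vv_def by (rule someI_ex)
  qed
  have "card G \<le> CARD('n)" if G: "G \<subseteq> ?E" "finite G" for G
  proof -
    have inj: "inj_on vv G"
    proof (rule inj_onI)
      fix x y assume xy: "x \<in> G" "y \<in> G" "vv x = vv y"
      have "x \<in> ?E" using G(1) xy(1) by (rule subsetD)
      note vx = vv[OF this]
      have "y \<in> ?E" using G(1) xy(2) by (rule subsetD)
      note vy = vv[OF this]
      have "x *s vv x = f (vv x)" using vx by (simp only:)
      also have "\<dots> = f (vv y)" using xy(3) by (simp only:)
      also have "\<dots> = y *s vv y" using vy by (simp only:)
      also have "\<dots> = y *s vv x" using xy(3) by (simp only:)
      finally have "x *s vv x = y *s vv x" .
      then show "x = y" using vx vec.scale_cancel_right by blast
    qed
    define e where "e = the_inv_into G vv"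
    have "vec.independent (vv ` G)"
    proof (rule eig_indep[OF lf])
      show "finite (vv ` G)" using G by simp
      show "\<forall>w\<in>vv ` G. w \<noteq> 0 \<and> f w = e w *s w"
      proof
        fix w assume "w \<in> vv ` G"
        then obtain m where m: "m \<in> G" "w = vv m" by blast
        have em: "e (vv m) = m" unfolding e_def by (rule the_inv_into_f_f[OF inj m(1)])
        have "m \<in> ?E" using G(1) m(1) by (rule subsetD)
        from vv[OF this] show "w \<noteq> 0 \<and> f w = e w *s w" unfolding m(2) em .
      qed
      show "inj_on e (vv ` G)" unfolding e_def by (rule inj_on_the_inv_into[OF inj])
    qed
    then have "card (vv ` G) \<le> vec.dim (vv ` G)" using vec.independent_bound_general by blast
    also have "\<dots> \<le> vec.dim (UNIV :: (complex^'n) set)" by (rule vec.dim_subset) (rule subset_UNIV)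
    also have "\<dots> = CARD('n)" by (simp only: vec.dim_UNIV card_cart_basis)
    finally show ?thesis using card_image[OF inj] by simp
  qed
  then show ?thesis using finite_if_finite_subsets_card_bdd by blast
qed

lemma eig_exists:
  fixes T :: "complex^'n \<Rightarrow> complex^'n"
  assumes lf: "Vector_Spaces.linear (*s) (*s) T" and K: "vec.subspace K" and TK: "T ` K \<subseteq> K"
    and z: "T z \<in> K" "z \<notin> K"
  shows "\<exists>v. v \<noteq> 0 \<and> T v = 0"
proof (rule ccontr)
  interpret lf: Vector_Spaces.linear "(*s)" "(*s)" T by (rule lf)
  assume "\<not> ?thesis"
  then have inj: "inj T"
  proof -
    assume n: "\<not> (\<exists>v. v \<noteq> 0 \<and> T v = 0)"
    show "inj T"
    proof (rule injI)
      fix x y assume "T x = T y"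
      then have "T (x - y) = 0" by (simp add: lf.diff)
      then have "x - y = 0" using n by blast
      then show "x = y" by simp
    qed
  qed
  have "vec.dim (T ` K) = vec.dim K"
    by (rule vec.dim_image_eq[OF lf]) (use inj in \<open>auto intro: inj_on_subset\<close>)
  then have "T ` K = K"
    using vec.subspace_dim_equal[OF lf.subspace_image[OF K] K TK] by simp
  then have "T z \<in> T ` K" using z by simp
  then obtain k where "k \<in> K" "T k = T z" by (metis imageE)
  then show False using inj z by (metis injD)
qed




context fixes br :: "complex^'n \<Rightarrow> complex^'n \<Rightarrow> complex^'n" assumes L: "lie_algebra br"
begin

lemma br_add_l: "br (x + y) z = br x z + br y z" using L by (simp add: lie_algebra_def)
lemma br_add_r: "br x (y + z) = br x y + br x z" using L by (simp add: lie_algebra_def)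
lemma br_sc_r: "br x (c *s y) = c *s br x y" using L by (simp add: lie_algebra_def)
lemma br_sc_l: "br (c *s x) y = c *s br x y" using L by (simp add: lie_algebra_def)
lemma br_alt: "br x x = 0" using L by (simp add: lie_algebra_def)
lemma br_jac: "br x (br y z) + br y (br z x) + br z (br x y) = 0" using L by (simp add: lie_algebra_def)

lemma br_zero_r: "br x 0 = 0"
proof -
  have "br x (0 + 0) = br x 0 + br x 0" by (rule br_add_r)
  then show ?thesis by simp
qed

lemma br_zero_l: "br 0 x = 0"
proof -
  have "br (0 + 0) x = br 0 x + br 0 x" by (rule br_add_l)
  then show ?thesis by simp
qed

lemma br_anti: "br y x = - br x y"
proof -
  have "br (x + y) (x + y) = 0" by (rule br_alt)
  then have "br x x + br y x + (br x y + br y y) = 0" by (simp add: br_add_l br_add_r)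
  then have "br y x + br x y = 0" by (simp add: br_alt)
  then show ?thesis by (simp add: eq_neg_iff_add_eq_0)
qed

lemma br_linear: "Vector_Spaces.linear (*s) (*s) (br x)"
  by unfold_locales (simp_all add: br_add_r br_sc_r)

lemma ideal: "u \<in> derived_series br m \<Longrightarrow> br x u \<in> derived_series br m"
proof (induction m arbitrary: u)
  case 0
  then show ?case by simp
next
  case (Suc m)
  from Suc.prems have "u \<in> bracket_sums br (derived_series br m)" by simp
  then have "br x u \<in> bracket_sums br (derived_series br m)"
  proof (induction rule: bracket_sums.induct)
    case bs_zero
    then show ?case by (simp add: br_zero_r bracket_sums.bs_zero)
  next
    case (bs_br a b)
    have "br x (br a b) = br a (br x b) + br (br x a) b"
    proof -
      have j: "br x (br a b) + br a (br b x) + br b (br x a) = 0" by (rule br_jac)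
      have n: "br a (- w) = - br a w" for w
      proof -
        have "br a (w + - w) = br a w + br a (- w)" by (rule br_add_r)
        then have "br a w + br a (- w) = 0" by (simp add: br_zero_r)
        then show ?thesis by (simp add: eq_neg_iff_add_eq_0 add.commute)
      qed
      have "br a (br b x) = - br a (br x b)" using br_anti[of x b] n by simp
      moreover have "br b (br x a) = - br (br x a) b" by (rule br_anti)
      ultimately have "br x (br a b) + - br a (br x b) + - br (br x a) b = 0" using j by simp
      then show ?thesis by (simp add: eq_neg_iff_add_eq_0 algebra_simps)
    qed
    moreover have "br a (br x b) \<in> bracket_sums br (derived_series br m)"
      by (rule bracket_sums.bs_br) (use bs_br Suc.IH in auto)
    moreover have "br (br x a) b \<in> bracket_sums br (derived_series br m)"
      by (rule bracket_sums.bs_br) (use bs_br Suc.IH in auto)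
    ultimately show ?case by (simp add: bracket_sums.bs_add)
  next
    case (bs_add u v)
    then show ?case by (simp add: br_add_r bracket_sums.bs_add)
  qed
  then show ?case by simp
qed

end

lemma lin_nth: "lin_of \<phi> x $ a $ b = (\<Sum>i\<in>UNIV. x $ i * \<phi> i $ a $ b)"
  by (simp add: lin_of_def sum_component)

lemma lin_add: "lin_of \<phi> (x + y) = lin_of \<phi> x + lin_of \<phi> y"
  by (simp add: vec_eq_iff lin_nth algebra_simps sum.distrib)

lemma lin_sc: "lin_of \<phi> (c *s x) = msc c (lin_of \<phi> x)"
  by (simp add: vec_eq_iff lin_nth sum_distrib_left algebra_simps)

lemma lin_zero: "lin_of \<phi> 0 = 0"
  by (simp add: vec_eq_iff lin_nth)

lemma lin_diff: "lin_of \<phi> (x - y) = lin_of \<phi> x - lin_of \<phi> y"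
  by (simp add: vec_eq_iff lin_nth algebra_simps sum_subtractf)

lemma lin_axis: "lin_of \<phi> (axis k 1) = \<phi> k"
proof -
  have "(\<Sum>i\<in>UNIV. axis k 1 $ i * \<phi> i $ a $ b) = \<phi> k $ a $ b" for a b
  proof -
    have "(\<Sum>i\<in>UNIV. axis k 1 $ i * \<phi> i $ a $ b) = (\<Sum>i\<in>UNIV. if i = k then \<phi> i $ a $ b else 0)"
      by (intro sum.cong) (auto simp: axis_def)
    then show ?thesis by simp
  qed
  then show ?thesis by (simp add: vec_eq_iff lin_nth)
qed

lemma lin_trace: "\<phi> \<in> hom_space \<Longrightarrow> trace (lin_of \<phi> x) = 0"
proof -
  assume h: "\<phi> \<in> hom_space"
  have "trace (lin_of \<phi> x) = (\<Sum>i\<in>UNIV. x $ i * trace (\<phi> i))"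
    by (simp add: trace2 lin_nth sum.distrib algebra_simps)
  also have "\<dots> = 0" using h by (simp add: hom_space_def sl2_def)
  finally show ?thesis .
qed

lemma rank_from: "(\<forall>k. \<exists>c. \<phi> k = msc c N) \<Longrightarrow> rank_le1 \<phi>"
proof -
  assume "\<forall>k. \<exists>c. \<phi> k = msc c N"
  then obtain c where c: "\<And>k. \<phi> k = msc (c k) N" by metis
  have "lin_of \<phi> x = msc (\<Sum>i\<in>UNIV. x $ i * c i) N" for x
  proof -
    have "(\<Sum>i\<in>UNIV. x $ i * (c i * N $ a $ b)) = (\<Sum>i\<in>UNIV. x $ i * c i) * N $ a $ b" for a b
      by (simp add: sum_distrib_right mult.assoc)
    then show ?thesis by (simp add: vec_eq_iff lin_nth c)
  qed
  then show ?thesis unfolding rank_le1_def by blast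
qed

lemma mbr_zero_r[simp]: "mbr A 0 = 0" by (simp add: mbr_def)
lemma mbr_anti: "mbr A B = - mbr B A" by (simp add: mbr_def)
lemma msc_zero[simp]: "msc c 0 = 0" by (simp add: vec_eq_iff)

lemma pf_prod: "finite S \<Longrightarrow> (\<forall>s\<in>S. f s \<in> poly_fun) \<Longrightarrow> (\<lambda>\<phi>. \<Prod>s\<in>S. f s \<phi>) \<in> poly_fun"
proof (induction S rule: finite_induct)
  case empty
  then show ?case by (simp add: poly_fun.pf_const)
next
  case (insert a S)
  have "(\<lambda>\<phi>. f a \<phi> * (\<Prod>s\<in>S. f s \<phi>)) \<in> poly_fun"
    using insert by (intro poly_fun.pf_mult) auto
  then show ?case using insert by simp
qed

lemma pf_cont: "p \<in> poly_fun \<Longrightarrow> continuous_on UNIV p"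
proof (induction rule: poly_fun.induct)
  case (pf_const c)
  then show ?case by (simp add: continuous_on_const)
next
  case (pf_coord i a b)
  show ?case by (intro continuous_on_component continuous_on_product_coordinates)
next
  case (pf_add p q)
  then show ?case by (intro continuous_on_add)
next
  case (pf_mult p q)
  then show ?case by (intro continuous_on_mult)
qed




lemma step_exists: "P 0 \<Longrightarrow> \<not> P K \<Longrightarrow> \<exists>m. P m \<and> \<not> P (Suc m)"
  by (induction K) auto

lemma key:
  fixes br :: "complex^'n \<Rightarrow> complex^'n \<Rightarrow> complex^'n"
  assumes L: "lie_algebra br" and S: "solvable_lie br" and R: "\<phi> \<in> rep_var br" and NR: "\<not> rank_le1 \<phi>"
  shows "\<exists>k l. l \<noteq> 0 \<and> (\<exists>v. v \<noteq> 0 \<and> br (axis k 1) v = l *s v) \<and> l^2 = 2 * trace (\<phi> k ** \<phi> k)"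
proof -
  have hom: "\<phi> \<in> hom_space" and hm: "\<And>x y. lin_of \<phi> (br x y) = mbr (lin_of \<phi> x) (lin_of \<phi> y)"
    using R by (auto simp: rep_var_def)
  have trk: "trace (\<phi> k) = 0" for k using hom by (simp add: hom_space_def sl2_def)
  obtain K0 where D: "derived_series br K0 = {0}" using S by (auto simp: solvable_lie_def)
  define P where "P j = (\<exists>u\<in>derived_series br j. lin_of \<phi> u \<noteq> 0)" for j
  have P0: "P 0"
  proof (rule ccontr)
    assume "\<not> P 0"
    then have "\<forall>x. lin_of \<phi> x = msc 0 0" by (simp add: P_def)
    then have "rank_le1 \<phi>" unfolding rank_le1_def by blast
    then show False using NR by simp
  qed
  have PK: "\<not> P K0" using D by (simp add: P_def lin_zero)
  obtain m where Pm: "P m" and nPm: "\<not> P (Suc m)" using step_exists[of P K0] P0 PK by blast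
  obtain u0 where u0: "u0 \<in> derived_series br m" and N: "lin_of \<phi> u0 \<noteq> 0"
    using Pm by (auto simp: P_def)
  define N where "N = lin_of \<phi> u0"
  have trN: "trace N = 0" unfolding N_def by (rule lin_trace[OF hom])
  have comm: "\<exists>c. lin_of \<phi> v = msc c N" if v: "v \<in> derived_series br m" for v
  proof -
    have "br u0 v \<in> derived_series br (Suc m)" using u0 v by (simp add: bracket_sums.bs_br)
    then have "lin_of \<phi> (br u0 v) = 0" using nPm by (auto simp: P_def)
    then have "mbr N (lin_of \<phi> v) = 0" by (simp add: hm N_def)
    then have "mbr (lin_of \<phi> v) N = 0" by (metis mbr_anti neg_equal_0_iff_equal)
    then show ?thesis using centralizer[OF lin_trace[OF hom] trN] N unfolding N_def by blast
  qed
  have "\<forall>k. \<exists>c. mbr (\<phi> k) N = msc c N"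
  proof
    fix k
    have "br (axis k 1) u0 \<in> derived_series br m" using ideal[OF L u0] .
    then obtain c where "lin_of \<phi> (br (axis k 1) u0) = msc c N" using comm by blast
    then show "\<exists>c. mbr (\<phi> k) N = msc c N" by (auto simp: hm lin_axis N_def)
  qed
  then obtain l where l: "\<And>k. mbr (\<phi> k) N = msc (l k) N" by metis
  have "\<exists>k. l k \<noteq> 0"
  proof (rule ccontr)
    assume "\<not> ?thesis"
    then have "\<forall>k. mbr (\<phi> k) N = 0" using l by (simp add: vec_eq_iff)
    then have "\<forall>k. \<exists>c. \<phi> k = msc c N" using centralizer[OF trk trN] N unfolding N_def by blast
    then show False using rank_from NR by blast
  qed
  then obtain k where lk: "l k \<noteq> 0" by blast
  have sq: "(l k)^2 = 2 * trace (\<phi> k ** \<phi> k)"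
    using eigen_sl2[OF trk trN _ l lk] N unfolding N_def by blast
  define T where "T v = br (axis k 1) v - l k *s v" for v
  have lT: "Vector_Spaces.linear (*s) (*s) T"
  proof
    show "T (x + y) = T x + T y" for x y
      by (simp add: T_def br_add_r[OF L] vector_add_ldistrib algebra_simps)
    show "T (c *s x) = c *s T x" for c x
      by (simp add: T_def br_sc_r[OF L] vector_ssub_ldistrib vector_smult_assoc mult.commute)
  qed
  define K where "K = {v. lin_of \<phi> v = 0}"
  have sK: "vec.subspace K"
    unfolding vec.subspace_def K_def by (simp add: lin_zero lin_add lin_sc)
  have TK: "T ` K \<subseteq> K"
    by (auto simp: K_def T_def lin_diff lin_sc hm)
  have Tz: "T u0 \<in> K"
    using l[of k] by (simp add: K_def T_def lin_diff lin_sc hm lin_axis N_def)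
  have z: "u0 \<notin> K" using N by (simp add: K_def)
  obtain v where "v \<noteq> 0" "T v = 0" using eig_exists[OF lT sK TK Tz z] by blast
  then have "br (axis k 1) v = l k *s v" by (simp add: T_def)
  then show ?thesis using lk sq \<open>v \<noteq> 0\<close> by blast
qed




theorem lemma4p3:
  fixes br :: "complex^'n \<Rightarrow> complex^'n \<Rightarrow> complex^'n"
  assumes "lie_algebra br" and "solvable_lie br"
  shows "(\<exists>W. zariski_closed W \<and> (\<lambda>_. 0) \<notin> W \<and> rep_var br \<subseteq> rep1_var br \<union> W)
       \<and> (\<exists>U. open U \<and> (\<lambda>_::'n. 0::complex^2^2) \<in> U \<and> rep_var br \<inter> U = rep1_var br \<inter> U)"
proof -
  note L = assms(1)
  define Eig where "Eig k = {\<mu>. \<exists>v. v \<noteq> 0 \<and> br (axis k 1) v = \<mu> *s v} - {0}" for k :: 'n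
  have fE: "finite (Eig k)" for k
    unfolding Eig_def using eig_finite[OF br_linear[OF L]] by blast
  define p :: "('n \<Rightarrow> complex^2^2) \<Rightarrow> complex"
    where "p \<phi> = (\<Prod>k\<in>UNIV. \<Prod>\<mu>\<in>Eig k. (2 * trace (\<phi> k ** \<phi> k) - \<mu>^2))" for \<phi>
  have inner: "(\<lambda>\<phi>::'n \<Rightarrow> complex^2^2. 2 * trace (\<phi> k ** \<phi> k) - \<mu>^2) \<in> poly_fun" for k \<mu>
  proof -
    have e: "(\<lambda>\<phi>::'n \<Rightarrow> complex^2^2. 2 * trace (\<phi> k ** \<phi> k) - \<mu>^2) =
      (\<lambda>\<phi>. ((\<phi> k$1$1 * \<phi> k$1$1 + \<phi> k$1$2 * \<phi> k$2$1) + (\<phi> k$2$1 * \<phi> k$1$2 + \<phi> k$2$2 * \<phi> k$2$2)) * 2 + (- (\<mu>^2)))"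
      by (rule ext) (simp add: trace2 mmul2 algebra_simps)
    have c: "(\<lambda>\<phi>::'n \<Rightarrow> complex^2^2. \<phi> k $ a $ b) \<in> poly_fun" for a b by (rule poly_fun.pf_coord)
    have "(\<lambda>\<phi>::'n \<Rightarrow> complex^2^2. ((\<phi> k$1$1 * \<phi> k$1$1 + \<phi> k$1$2 * \<phi> k$2$1) + (\<phi> k$2$1 * \<phi> k$1$2 + \<phi> k$2$2 * \<phi> k$2$2)) * 2 + (- (\<mu>^2))) \<in> poly_fun"
      by (intro poly_fun.pf_add poly_fun.pf_mult c poly_fun.pf_const)
    then show ?thesis unfolding e .
  qed
  have mid: "(\<lambda>\<phi>::'n \<Rightarrow> complex^2^2. \<Prod>\<mu>\<in>Eig k. (2 * trace (\<phi> k ** \<phi> k) - \<mu>^2)) \<in> poly_fun" for k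
    using pf_prod[where f="\<lambda>\<mu> \<phi>. 2 * trace (\<phi> k ** \<phi> k) - \<mu>^2", OF fE] inner by blast
  have pP: "p \<in> poly_fun"
    unfolding p_def
    using pf_prod[where f="\<lambda>k \<phi>. \<Prod>\<mu>\<in>Eig k. (2 * trace (\<phi> k ** \<phi> k) - \<mu>^2)" and S=UNIV] mid by simp
  define W where "W = {\<phi> \<in> hom_space. \<forall>q\<in>{p}. q \<phi> = 0}"
  have zW: "zariski_closed W" unfolding zariski_closed_def W_def using pP by blast
  have p0: "p (\<lambda>_. 0) \<noteq> 0"
    unfolding p_def using fE by (simp add: prod_zero_iff Eig_def trace2)
  have W0: "(\<lambda>_. 0) \<notin> W" using p0 by (simp add: W_def)
  have sub: "rep_var br \<subseteq> rep1_var br \<union> W"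
  proof
    fix \<phi> assume R: "\<phi> \<in> rep_var br"
    show "\<phi> \<in> rep1_var br \<union> W"
    proof (cases "rank_le1 \<phi>")
      case True
      then show ?thesis using R by (simp add: rep1_var_def)
    next
      case False
      obtain k l where kl: "l \<noteq> 0" "\<exists>v. v \<noteq> 0 \<and> br (axis k 1) v = l *s v" "l^2 = 2 * trace (\<phi> k ** \<phi> k)"
        using key[OF L assms(2) R False] by blast
      have lE: "l \<in> Eig k" using kl by (simp add: Eig_def)
      have "(\<Prod>\<mu>\<in>Eig k. (2 * trace (\<phi> k ** \<phi> k) - \<mu>^2)) = 0"
        using fE lE kl(3) by (simp add: prod_zero_iff) (metis right_minus_eq)
      then have "p \<phi> = 0" unfolding p_def by (simp add: prod_zero_iff) blast
      moreover have "\<phi> \<in> hom_space" using R by (simp add: rep_var_def)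
      ultimately show ?thesis by (simp add: W_def)
    qed
  qed
  have W_eq: "W = {\<phi>. (\<forall>i. \<phi> i $ 1 $ 1 + \<phi> i $ 2 $ 2 = 0) \<and> p \<phi> = 0}"
    by (auto simp: W_def hom_space_def sl2_def trace2)
  have cW: "closed W"
    unfolding W_eq
  proof (intro closed_Collect_conj closed_Collect_all)
    fix i
    show "closed {\<phi>::'n \<Rightarrow> complex^2^2. \<phi> i $ 1 $ 1 + \<phi> i $ 2 $ 2 = 0}"
      by (intro closed_Collect_eq continuous_intros continuous_on_component continuous_on_product_coordinates)
    show "closed {\<phi>. p \<phi> = 0}"
      by (intro closed_Collect_eq pf_cont[OF pP] continuous_on_const)
  qed
  show ?thesis
  proof (intro conjI exI)
    show "zariski_closed W" "(\<lambda>_. 0) \<notin> W" "rep_var br \<subseteq> rep1_var br \<union> W" by (fact zW W0 sub)+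
    show "open (- W)" using cW by (simp add: open_Compl)
    show "(\<lambda>_::'n. 0::complex^2^2) \<in> - W" using W0 by simp
    show "rep_var br \<inter> - W = rep1_var br \<inter> - W"
      using sub by (auto simp: rep1_var_def)
  qed
qed


end
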